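(* Let $n\ge0$ be an integer, $\kappa\ge0$, and suppose each arc travel time function has the form $t_a(\mathbf v)=\sum_{m=0}^nb_{am}\big(\sum_{e\in\mathcal A}d_{aem}v_e\big)^m$ with constants $b_{am}\ge0$, $d_{aem}\ge0$. If $\mathbf f^0\in\mathbf F$ is a PRUE flow, then $(1+\kappa)\mathbf f^0$ is a $\sigma$-MSatUE flow in $\mathbf F_{1+\kappa}$ (i.e. for the demands $(1+\kappa)Q_w$), where $\sigma=(1+\kappa)^n-1$. In particular, when $n=1$, $\sigma=\kappa$.
   Context: Let $G=(\mathcal N,\mathcal A)$ be a finite directed graph and $\mathcal W$ a finite set of OD pairs; each $w$ has demand $Q_w>0$ and a finite set $\mathcal P_w$ of paths from its origin to its destination; $\mathcal P=\bigcup_w\mathcal P_w$; $\delta^p_a=1$ if arc $a$ lies on path $p$, else $0$. $\mathbf F=\{\mathbf f\ge0:\sum_{p\in\mathcal P_w}f_p=Q_w\ \forall w\}$, $\mathbf F_{1+\kappa}=\{(1+\kappa)\mathbf f:\mathbf f\in\mathbf F\}$. Arc flow $v_a=\sum_p\delta^p_af_p$; path travel time $c_p(\mathbf f)=\sum_a\delta^p_at_a(\mathbf v)$. A feasible flow (in the relevant set) is a PRUE if for all $w$, $p\in\mathcal P_w$: $f_p>0\implies c_p(\mathbf f)=\min_{p'\in\mathcal P_w}c_{p'}(\mathbf f)$; for $\sigma\ge0$ it is a $\sigma$-MSatUE if $f_p>0\implies c_p(\mathbf f)\le(1+\sigma)\min_{p'\in\mathcal P_w}c_{p'}(\mathbf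 f)$. *)

theory Defs
  imports Complex_Main
begin

text \<open>Nodes have type 'n, an arc is an ordered pair of nodes,
  an OD pair is a pair (origin, destination), and a path is a list of nodes
  whose consecutive pairs are arcs.\<close>

definition path_arcs :: "'n list \<Rightarrow> ('n \<times> 'n) set" where
  "path_arcs p = set (zip p (tl p))"

definition network ::
  "'n set \<Rightarrow> ('n \<times> 'n) set \<Rightarrow> ('n \<times> 'n) set \<Rightarrow> (('n \<times> 'n) \<Rightarrow> real)
     \<Rightarrow> (('n \<times> 'n) \<Rightarrow> 'n list set) \<Rightarrow> bool" where
  "network N A W Q Pw \<longleftrightarrow>
     finite N \<and> finite A \<and> A \<subseteq> N \<times> N \<and> finite W \<and> W \<subseteq> N \<times> N \<and>
     (\<forall>w\<in>W. Q w > 0) \<and>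
     (\<forall>w\<in>W. finite (Pw w) \<and>
        (\<forall>p\<in>Pw w. p \<noteq> [] \<and> hd p = fst w \<and> last p = snd w \<and> path_arcs p \<subseteq> A))"

definition all_paths :: "('n \<times> 'n) set \<Rightarrow> (('n \<times> 'n) \<Rightarrow> 'n list set) \<Rightarrow> 'n list set" where
  "all_paths W Pw = (\<Union>w\<in>W. Pw w)"

definition feasible ::
  "('n \<times> 'n) set \<Rightarrow> (('n \<times> 'n) \<Rightarrow> real) \<Rightarrow> (('n \<times> 'n) \<Rightarrow> 'n list set)
     \<Rightarrow> ('n list \<Rightarrow> real) set" where
  "feasible W Q Pw = {f. (\<forall>p\<in>all_paths W Pw. f p \<ge> 0) \<and> (\<forall>w\<in>W. (\<Sum>p\<in>Pw w. f p) = Q w)}"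

definition arc_flow ::
  "('n \<times> 'n) set \<Rightarrow> (('n \<times> 'n) \<Rightarrow> 'n list set) \<Rightarrow> ('n list \<Rightarrow> real) \<Rightarrow> ('n \<times> 'n) \<Rightarrow> real" where
  "arc_flow W Pw f a = (\<Sum>p\<in>all_paths W Pw. (if a \<in> path_arcs p then 1 else 0) * f p)"

definition path_cost ::
  "('n \<times> 'n) set \<Rightarrow> ('n \<times> 'n) set \<Rightarrow> (('n \<times> 'n) \<Rightarrow> 'n list set)
     \<Rightarrow> (('n \<times> 'n) \<Rightarrow> (('n \<times> 'n) \<Rightarrow> real) \<Rightarrow> real) \<Rightarrow> ('n list \<Rightarrow> real) \<Rightarrow> 'n list \<Rightarrow> real" where
  "path_cost A W Pw t f p = (\<Sum>a\<in>A. (if a \<in> path_arcs p then 1 else 0) * t a (arc_flow W Pw f))"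

definition MSatUE where
  "MSatUE A W Q Pw t \<sigma> f \<longleftrightarrow> f \<in> feasible W Q Pw \<and>
     (\<forall>w\<in>W. \<forall>p\<in>Pw w. f p > 0 \<longrightarrow>
        path_cost A W Pw t f p \<le> (1 + \<sigma>) * (MIN p'\<in>Pw w. path_cost A W Pw t f p'))"

definition PRUE where
  "PRUE A W Q Pw t f \<longleftrightarrow> f \<in> feasible W Q Pw \<and>
     (\<forall>w\<in>W. \<forall>p\<in>Pw w. f p > 0 \<longrightarrow>
        path_cost A W Pw t f p = (MIN p'\<in>Pw w. path_cost A W Pw t f p'))"

end

theory Submission
  imports Defs
begin

theorem lemma8:
  fixes N :: "'n set" and A W :: "('n \<times> 'n) set" and Q :: "('n \<times> 'n) \<Rightarrow> real"
    and Pw :: "('n \<times> 'n) \<Rightarrow> 'n list set"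
    and t :: "('n \<times> 'n) \<Rightarrow> (('n \<times> 'n) \<Rightarrow> real) \<Rightarrow> real"
    and n :: nat and \<kappa> :: real
    and b :: "('n \<times> 'n) \<Rightarrow> nat \<Rightarrow> real" and d :: "('n \<times> 'n) \<Rightarrow> ('n \<times> 'n) \<Rightarrow> nat \<Rightarrow> real"
    and f0 :: "'n list \<Rightarrow> real"
  assumes net: "network N A W Q Pw"
    and kappa: "\<kappa> \<ge> 0"
    and b_nonneg: "\<forall>a\<in>A. \<forall>m\<le>n. b a m \<ge> 0"
    and d_nonneg: "\<forall>a\<in>A. \<forall>e\<in>A. \<forall>m\<le>n. d a e m \<ge> 0"
    and t_form: "\<forall>a\<in>A. \<forall>v. t a v = (\<Sum>m\<le>n. b a m * (\<Sum>e\<in>A. d a e m * v e) ^ m)"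
    and prue: "f0 \<in> feasible W Q Pw" "PRUE A W Q Pw t f0"
  shows "(\<lambda>p. (1 + \<kappa>) * f0 p) \<in> (\<lambda>f. (\<lambda>p. (1 + \<kappa>) * f p)) ` feasible W Q Pw
       \<and> MSatUE A W (\<lambda>w. (1 + \<kappa>) * Q w) Pw t ((1 + \<kappa>) ^ n - 1) (\<lambda>p. (1 + \<kappa>) * f0 p)"
proof -
  define c where "c = 1 + \<kappa>"
  have c1: "c \<ge> 1" using kappa c_def by simp
  define f where "f = (\<lambda>p. c * f0 p)"
  have feas0: "\<forall>p\<in>all_paths W Pw. f0 p \<ge> 0" "\<forall>w\<in>W. (\<Sum>p\<in>Pw w. f0 p) = Q w"
    using prue(1) by (auto simp: feasible_def)
  have v0nn: "arc_flow W Pw f0 e \<ge> 0" for e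
    unfolding arc_flow_def using feas0(1) by (intro sum_nonneg) auto
  have vf: "arc_flow W Pw f = (\<lambda>e. c * arc_flow W Pw f0 e)"
    by (rule ext) (simp add: arc_flow_def f_def sum_distrib_left algebra_simps)
  have tbounds: "t a (arc_flow W Pw f0) \<le> t a (arc_flow W Pw f) \<and>
      t a (arc_flow W Pw f) \<le> c ^ n * t a (arc_flow W Pw f0)" if aA: "a \<in> A" for a
  proof -
    let ?v = "arc_flow W Pw f0"
    define x where "x m = (\<Sum>e\<in>A. d a e m * ?v e)" for m
    have xnn: "m \<le> n \<Longrightarrow> x m \<ge> 0" for m
      unfolding x_def using d_nonneg aA v0nn by (intro sum_nonneg) auto
    have tx0: "t a ?v = (\<Sum>m\<le>n. b a m * x m ^ m)" using t_form aA x_def by simp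
    have tx1: "t a (arc_flow W Pw f) = (\<Sum>m\<le>n. b a m * (c * x m) ^ m)"
      using t_form aA unfolding x_def vf
      by (simp add: sum_distrib_left algebra_simps)
    have l: "b a m * x m ^ m \<le> b a m * (c * x m) ^ m" if "m \<in> {..n}" for m
    proof -
      have "x m ^ m \<le> (c * x m) ^ m"
        using xnn[of m] that c1 by (intro power_mono) (auto intro: mult_left_le_one_le order.trans[of _ "1 * x m"] mult_right_mono)
      thus ?thesis using b_nonneg aA that by (intro mult_left_mono) auto
    qed
    have u: "b a m * (c * x m) ^ m \<le> c ^ n * (b a m * x m ^ m)" if "m \<in> {..n}" for m
    proof -
      have "c ^ m \<le> c ^ n" using c1 that by (intro power_increasing) auto
      moreover have "b a m * x m ^ m \<ge> 0" using b_nonneg aA that xnn[of m] by auto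
      ultimately have "c ^ m * (b a m * x m ^ m) \<le> c ^ n * (b a m * x m ^ m)"
        by (intro mult_right_mono) auto
      thus ?thesis by (simp add: power_mult_distrib algebra_simps)
    qed
    show ?thesis unfolding tx0 tx1
      using sum_mono[of "{..n}", OF l] sum_mono[of "{..n}", OF u] by (simp add: sum_distrib_left)
  qed
  have cb: "path_cost A W Pw t f0 p \<le> path_cost A W Pw t f p \<and>
     path_cost A W Pw t f p \<le> c ^ n * path_cost A W Pw t f0 p" for p
    unfolding path_cost_def sum_distrib_left
    using tbounds by (auto intro!: sum_mono simp: algebra_simps)
  have fin: "\<forall>w\<in>W. finite (Pw w)" using net by (simp add: network_def)
  have feasf: "f \<in> feasible W (\<lambda>w. c * Q w) Pw"
    using feas0 c1 unfolding feasible_def f_def by (auto simp: sum_distrib_left[symmetric])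
  have ms: "path_cost A W Pw t f p \<le> c ^ n * (MIN p'\<in>Pw w. path_cost A W Pw t f p')"
    if w: "w \<in> W" and p: "p \<in> Pw w" and pos: "f p > 0" for w p
  proof -
    have "f0 p > 0" using pos c1 unfolding f_def by (simp add: zero_less_mult_iff)
    hence eq: "path_cost A W Pw t f0 p = (MIN p'\<in>Pw w. path_cost A W Pw t f0 p')"
      using prue(2) w p by (auto simp: PRUE_def)
    have ne: "Pw w \<noteq> {}" using p by auto
    have "(MIN p'\<in>Pw w. path_cost A W Pw t f0 p') \<le> (MIN p'\<in>Pw w. path_cost A W Pw t f p')"
      using fin w ne cb by (auto simp: Min_le_iff intro!: Min.boundedI)
    hence "path_cost A W Pw t f0 p \<le> (MIN p'\<in>Pw w. path_cost A W Pw t f p')" using eq by simp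
    moreover have "c ^ n \<ge> 0" using c1 by simp
    ultimately show ?thesis using cb[of p] by (meson mult_left_mono order.trans)
  qed
  show ?thesis
    unfolding MSatUE_def
    using prue(1) feasf ms unfolding f_def c_def by auto
qed

end
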